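(* Let $\mathcal{P}\subset\mathbb{R}^d$ be a finite set of item vectors, $\bm{q}\in\mathbb{R}^d$, $k>1$ an integer, $\lambda\in[0,1]$, $\mu>0$, and assume $\langle\bm{x},\bm{y}\rangle\ge0$ for all $\bm{x},\bm{y}\in\mathcal{P}\cup\{\bm{q}\}$. Let $\mathcal{N}\subseteq\mathcal{P}$ be nonempty with center $\bm{c}=\frac{1}{|\mathcal{N}|}\sum_{\bm{p}\in\mathcal{N}}\bm{p}$, and for $\bm{p}\in\mathcal{N}$ let $r_{\bm{p}}=\|\bm{p}-\bm{c}\|$. Then for every $\bm{p}\in\mathcal{N}$, every $\mathcal{S}\subseteq\mathcal{P}$, and $\Delta_f$ equal to either $\Delta_{f_{avg}}$ or $\Delta_{f_{max}}$, $$\Delta_f(\bm{p},\mathcal{S})\le\tfrac{\lambda}{k}\big(\langle\bm{q},\bm{c}\rangle+r_{\bm{p}}\|\bm{q}\|\big).$$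
   Context: $\Delta_{f_{avg}}(\bm{p},\mathcal{S}) = \frac{\lambda}{k}\langle\bm{p},\bm{q}\rangle - \frac{2\mu(1-\lambda)}{k(k-1)}\sum_{\bm{p}'\in\mathcal{S}}\langle\bm{p},\bm{p}'\rangle$ and $\Delta_{f_{max}}(\bm{p},\mathcal{S}) = \frac{\lambda}{k}\langle\bm{p},\bm{q}\rangle - \mu(1-\lambda)\big(\max_{\bm{p}_x\ne\bm{p}_y\in\mathcal{S}\cup\{\bm{p}\}}\langle\bm{p}_x,\bm{p}_y\rangle - \max_{\bm{p}_x\ne\bm{p}_y\in\mathcal{S}}\langle\bm{p}_x,\bm{p}_y\rangle\big)$, where a maximum over an empty collection of pairs is taken to be $0$. The set $\mathcal{N}$ plays the role of a leaf node of a ball tree (BC-Tree) storing its centroid and, for each item, its distance to the centroid. *)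

theory Defs
  imports "HOL-Analysis.Analysis"
begin

definition max_pair_inner :: "'a::real_inner set \<Rightarrow> real" where
  "max_pair_inner T =
     (if \<exists>x\<in>T. \<exists>y\<in>T. x \<noteq> y
      then Max {inner x y | x y. x \<in> T \<and> y \<in> T \<and> x \<noteq> y}
      else 0)"

definition delta_avg :: "real \<Rightarrow> real \<Rightarrow> nat \<Rightarrow> 'a::real_inner \<Rightarrow> 'a \<Rightarrow> 'a set \<Rightarrow> real" where
  "delta_avg lam mu k q p S =
     lam / real k * inner p q
     - 2 * mu * (1 - lam) / (real k * (real k - 1)) * (\<Sum>p'\<in>S. inner p p')"

definition delta_max :: "real \<Rightarrow> real \<Rightarrow> nat \<Rightarrow> 'a::real_inner \<Rightarrow> 'a \<Rightarrow> 'a set \<Rightarrow> real" where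
  "delta_max lam mu k q p S =
     lam / real k * inner p q
     - mu * (1 - lam) * (max_pair_inner (S \<union> {p}) - max_pair_inner S)"

end

theory Submission
  imports Defs
begin

lemma mpi_fin: "finite T \<Longrightarrow> finite {inner x y | x y. x \<in> T \<and> y \<in> T \<and> x \<noteq> y}"
proof -
  assume "finite T"
  have "{inner x y | x y. x \<in> T \<and> y \<in> T \<and> x \<noteq> y} \<subseteq> (\<lambda>(x,y). inner x y) ` (T \<times> T)"
    by auto
  then show ?thesis using \<open>finite T\<close> finite_subset by blast
qed

lemma mpi_mono:
  fixes S P :: "'a::real_inner set"
  assumes "finite P" "S \<subseteq> P" "p \<in> P" "\<forall>x\<in>P. \<forall>y\<in>P. inner x y \<ge> 0"
  shows "max_pair_inner S \<le> max_pair_inner (S \<union> {p})"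
proof -
  have fS: "finite S" using assms finite_subset by blast
  have fS': "finite (S \<union> {p})" using fS by simp
  let ?A = "{inner x y | x y. x \<in> S \<and> y \<in> S \<and> x \<noteq> y}"
  let ?B = "{inner x y | x y. x \<in> S \<union> {p} \<and> y \<in> S \<union> {p} \<and> x \<noteq> y}"
  show ?thesis
  proof (cases "\<exists>x\<in>S. \<exists>y\<in>S. x \<noteq> y")
    case True
    then have ne: "?A \<noteq> {}" by blast
    have sub: "?A \<subseteq> ?B" by blast
    have "Max ?A \<le> Max ?B" using Max_mono[OF sub ne mpi_fin[OF fS']] .
    moreover have "\<exists>x\<in>S \<union> {p}. \<exists>y\<in>S \<union> {p}. x \<noteq> y" using True by blast
    ultimately show ?thesis using True unfolding max_pair_inner_def by simp
  next
    case False
    then have z: "max_pair_inner S = 0" unfolding max_pair_inner_def by simp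
    show ?thesis
    proof (cases "\<exists>x\<in>S \<union> {p}. \<exists>y\<in>S \<union> {p}. x \<noteq> y")
      case True
      then obtain x y where xy: "x \<in> S \<union> {p}" "y \<in> S \<union> {p}" "x \<noteq> y" by blast
      then have "inner x y \<in> ?B" by blast
      then have "inner x y \<le> Max ?B" using mpi_fin[OF fS'] by simp
      moreover have "inner x y \<ge> 0" using xy assms by blast
      ultimately show ?thesis using True z unfolding max_pair_inner_def by simp
    next
      case False
      then show ?thesis using z unfolding max_pair_inner_def by simp
    qed
  qed
qed

theorem corollary1:
  fixes P N S :: "'a::euclidean_space set" and q p :: 'a
    and k :: nat and lam mu :: real
    and Delta :: "real \<Rightarrow> real \<Rightarrow> nat \<Rightarrow> 'a \<Rightarrow> 'a \<Rightarrow> 'a set \<Rightarrow> real"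
  assumes "finite P"
    and "k > 1"
    and "0 \<le> lam" "lam \<le> 1"
    and "mu > 0"
    and "\<forall>x\<in>P \<union> {q}. \<forall>y\<in>P \<union> {q}. inner x y \<ge> 0"
    and "N \<subseteq> P" "N \<noteq> {}"
    and "p \<in> N"
    and "S \<subseteq> P"
    and "Delta = delta_avg \<or> Delta = delta_max"
  shows "let c = (1 / real (card N)) *\<^sub>R (\<Sum>x\<in>N. x);
             r = norm (p - c)
         in Delta lam mu k q p S \<le> lam / real k * (inner q c + r * norm q)"
proof -
  define c where "c = (1 / real (card N)) *\<^sub>R (\<Sum>x\<in>N. x)"
  have pP: "p \<in> P" using assms by blast
  have cs: "inner q (p - c) \<le> norm (p - c) * norm q"
    using Cauchy_Schwarz_ineq2[of q "p - c"] by (simp add: mult.commute)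
  have "inner p q = inner q c + inner q (p - c)"
    by (simp add: inner_diff_right inner_commute)
  also have "\<dots> \<le> inner q c + norm (p - c) * norm q" using cs by simp
  finally have ip: "inner p q \<le> inner q c + norm (p - c) * norm q" .
  have lk: "lam / real k \<ge> 0" using assms by simp
  have main: "lam / real k * inner p q \<le> lam / real k * (inner q c + norm (p - c) * norm q)"
    using mult_left_mono[OF ip lk] .
  have "Delta lam mu k q p S \<le> lam / real k * inner p q"
  proof (cases "Delta = delta_avg")
    case True
    have s: "(\<Sum>p'\<in>S. inner p p') \<ge> 0"
      by (rule sum_nonneg) (use assms pP in blast)
    have "real k - 1 > 0" using assms by simp
    then have co: "2 * mu * (1 - lam) / (real k * (real k - 1)) \<ge> 0" using assms by simp
    show ?thesis using True mult_nonneg_nonneg[OF co s] unfolding delta_avg_def by simp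
  next
    case False
    then have D: "Delta = delta_max" using assms by blast
    have m: "max_pair_inner S \<le> max_pair_inner (S \<union> {p})"
      by (rule mpi_mono[OF assms(1) assms(10) pP]) (use assms in blast)
    have "mu * (1 - lam) \<ge> 0" using assms by simp
    then have "mu * (1 - lam) * (max_pair_inner (S \<union> {p}) - max_pair_inner S) \<ge> 0"
      using m by simp
    then show ?thesis using D unfolding delta_max_def by simp
  qed
  with main show ?thesis unfolding c_def[symmetric] Let_def by linarith
qed

end
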